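(* Let $\alpha,\beta,c\in\mathbb{C}$, $\ell(x,y)=\alpha x+\beta y$, and let $C(x,y)$ be a quadratic polynomial. For the pencil $\mathfrak E$ consisting of the conics $$\mathcal E_\lambda:\quad C(x,y)-\lambda\big(c^2-\ell^2(x,y)\big)=0,$$ the involution $I_{\mathfrak E,B_\infty}$ with $B_\infty=[-\beta:\alpha:0]$ is an affine map of $\mathbb{C}^2$.
   Context: For a nonsingular conic $\mathcal E$ and a point $B\notin\mathcal E$ of $\mathbb{C}P^2$ (possibly at infinity), $I_{\mathcal E,B}:\mathcal E\to\mathcal E$ sends $P$ to the second intersection point of $\mathcal E$ with the line $(BP)$. For a pencil $\mathfrak E=\{\mathcal E_\lambda\}$ of conics, the $B$-switch $I_{\mathfrak E,B}:\mathbb{C}^2\dashrightarrow\mathbb{C}^2$ sends a non-base point $P$ to $I_{\mathcal E_\lambda,B}(P)$, where $\mathcal E_\lambda$ is the unique conic of the pencil through $P$. *)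

theory Defs
  imports "HOL-Analysis.Analysis"
begin

text \<open>Points of the complex projective plane are represented by nonzero vectors of
  complex^3 (homogeneous coordinates [X:Y:Z]); conics by symmetric 3x3 complex
  matrices M, the conic being the zero set of the quadratic form qf M.
  The affine point (x,y) of C^2 is [x:y:1].\<close>

definition vec3 :: "complex \<Rightarrow> complex \<Rightarrow> complex \<Rightarrow> complex^3" where
  "vec3 a b c = (\<chi> i. if i = 1 then a else if i = 2 then b else c)"

definition sym3 :: "complex \<Rightarrow> complex \<Rightarrow> complex \<Rightarrow> complex \<Rightarrow> complex \<Rightarrow> complex
    \<Rightarrow> complex^3^3" where
  "sym3 m11 m22 m33 m12 m13 m23 =
     (\<chi> i j. if i = 1 \<and> j = 1 then m11 else if i = 2 \<and> j = 2 then m22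
            else if i = 3 \<and> j = 3 then m33
            else if (i = 1 \<and> j = 2) \<or> (i = 2 \<and> j = 1) then m12
            else if (i = 1 \<and> j = 3) \<or> (i = 3 \<and> j = 1) then m13
            else m23)"

definition qf :: "complex^3^3 \<Rightarrow> complex^3 \<Rightarrow> complex" where
  "qf M p = (\<Sum>i\<in>UNIV. \<Sum>j\<in>UNIV. M$i$j * p$i * p$j)"

definition nonsingular_conic :: "complex^3^3 \<Rightarrow> bool" where
  "nonsingular_conic M \<longleftrightarrow> det M \<noteq> 0"

definition proj_eq :: "complex^3 \<Rightarrow> complex^3 \<Rightarrow> bool" where
  "proj_eq p q \<longleftrightarrow> p \<noteq> 0 \<and> q \<noteq> 0 \<and> (\<exists>k. k \<noteq> 0 \<and> q = k *s p)"

definition on_line :: "complex^3 \<Rightarrow> complex^3 \<Rightarrow> complex^3 \<Rightarrow> bool" where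
  "on_line B P q \<longleftrightarrow> q \<noteq> 0 \<and> (\<exists>s t. q = s *s B + t *s P)"

text \<open>second_int M B P Q: Q is the second intersection point of the conic M with the
  line (BP): Q is on the conic and on the line, and Q differs from P unless P is the
  only intersection point (tangency, counted with multiplicity two).\<close>
definition second_int :: "complex^3^3 \<Rightarrow> complex^3 \<Rightarrow> complex^3 \<Rightarrow> complex^3 \<Rightarrow> bool" where
  "second_int M B P Q \<longleftrightarrow> on_line B P Q \<and> qf M Q = 0 \<and>
     (\<not> proj_eq P Q \<or> (\<forall>R. on_line B P R \<and> qf M R = 0 \<longrightarrow> proj_eq P R))"

definition pencil :: "complex^3^3 \<Rightarrow> complex^3^3 \<Rightarrow> (complex^3^3) set" where
  "pencil M1 M2 = {(\<chi> i j. \<mu> * M1$i$j + \<nu> * M2$i$j) | \<mu> \<nu>. (\<mu>, \<nu>) \<noteq> (0, 0)}"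

definition base_point :: "(complex^3^3) set \<Rightarrow> complex^3 \<Rightarrow> bool" where
  "base_point \<E> p \<longleftrightarrow> (\<forall>M\<in>\<E>. qf M p = 0)"

text \<open>Homogenized matrix of C(x,y) = a x^2 + b x y + d y^2 + e x + f y + g.\<close>
definition quad_matrix :: "complex \<Rightarrow> complex \<Rightarrow> complex \<Rightarrow> complex \<Rightarrow> complex \<Rightarrow> complex
    \<Rightarrow> complex^3^3" where
  "quad_matrix a b d e f g = sym3 a d g (b/2) (e/2) (f/2)"

text \<open>Homogenized matrix of c^2 - (alpha x + beta y)^2.\<close>
definition line_sq_matrix :: "complex \<Rightarrow> complex \<Rightarrow> complex \<Rightarrow> complex^3^3" where
  "line_sq_matrix \<alpha> \<beta> c = sym3 (-(\<alpha>^2)) (-(\<beta>^2)) (c^2) (-(\<alpha>*\<beta>)) 0 0"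

end

theory Submission
  imports Defs
begin

lemma vec3_nth: "vec3 a b c $ 1 = a" "vec3 a b c $ 2 = b" "vec3 a b c $ 3 = c"
  by (simp_all add: vec3_def)

lemma vec3_eq: "vec3 a b c = vec3 a' b' c' \<longleftrightarrow> a = a' \<and> b = b' \<and> c = c'"
  by (auto simp: vec_eq_iff forall_3 vec3_nth)

lemma vec3_ex: "R = vec3 (R$1) (R$2) (R$3)"
  by (simp add: vec_eq_iff forall_3 vec3_nth)

lemma vec3_smult: "k *s vec3 a b c = vec3 (k*a) (k*b) (k*c)"
  by (simp add: vec_eq_iff forall_3 vec3_nth)

lemma vec3_add: "vec3 a b c + vec3 a' b' c' = vec3 (a+a') (b+b') (c+c')"
  by (simp add: vec_eq_iff forall_3 vec3_nth)

lemma vec3_zero: "vec3 a b c = 0 \<longleftrightarrow> a = 0 \<and> b = 0 \<and> c = 0"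
  by (simp add: vec_eq_iff forall_3 vec3_nth)

definition FF :: "complex \<Rightarrow> complex \<Rightarrow> complex \<Rightarrow> complex \<Rightarrow> complex \<Rightarrow> complex \<Rightarrow> complex \<Rightarrow> complex \<Rightarrow> complex \<Rightarrow> complex \<Rightarrow> complex \<Rightarrow> complex \<Rightarrow> complex \<Rightarrow> complex \<Rightarrow> complex" where "FF \<mu> \<nu> a b d e f g \<alpha> \<beta> c X Y Z =
  \<mu>*(a*X^2 + b*X*Y + d*Y^2 + e*X*Z + f*Y*Z + g*Z^2) + \<nu>*(c^2*Z^2 - (\<alpha>*X+\<beta>*Y)^2)"

lemma qf_pencil: "qf (\<chi> i j. \<mu> * quad_matrix a b d e f g $i$j + \<nu> * line_sq_matrix \<alpha> \<beta> c $i$j) (vec3 X Y Z)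
  = FF \<mu> \<nu> a b d e f g \<alpha> \<beta> c X Y Z"
  by (simp add: qf_def sum_3 vec3_nth quad_matrix_def line_sq_matrix_def sym3_def FF_def)
     (simp add: algebra_simps power2_eq_square)

lemma FF_line: "FF \<mu> \<nu> a b d e f g \<alpha> \<beta> c (t*x - u*\<beta>) (t*y + u*\<alpha>) t =
  t^2 * FF \<mu> \<nu> a b d e f g \<alpha> \<beta> c x y 1
  + 2*u*t*\<mu>*((-a*\<beta> + b*\<alpha>/2)*x + (-b*\<beta>/2 + d*\<alpha>)*y + (-e*\<beta>+f*\<alpha>)/2)
  + u^2*\<mu>*(a*\<beta>^2 - b*\<alpha>*\<beta> + d*\<alpha>^2)"
  by (simp add: FF_def field_simps power2_eq_square)

theorem corollary1:
  fixes \<alpha> \<beta> c a b d e f g :: complex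
  assumes "(\<alpha>, \<beta>) \<noteq> (0, 0)"
    and "(a, b, d) \<noteq> (0, 0, 0)"
  defines "\<E> \<equiv> pencil (quad_matrix a b d e f g) (line_sq_matrix \<alpha> \<beta> c)"
    and "B \<equiv> vec3 (-\<beta>) \<alpha> 0"
  shows "\<exists>a11 a12 a21 a22 b1 b2 :: complex.
    \<forall>x y :: complex. \<forall>M\<in>\<E>.
      \<not> base_point \<E> (vec3 x y 1) \<and> qf M (vec3 x y 1) = 0 \<and>
      nonsingular_conic M \<and> qf M B \<noteq> 0 \<longrightarrow>
        second_int M B (vec3 x y 1) (vec3 (a11*x + a12*y + b1) (a21*x + a22*y + b2) 1) \<and>
        (\<forall>Q. second_int M B (vec3 x y 1) Q \<longrightarrow>
              proj_eq Q (vec3 (a11*x + a12*y + b1) (a21*x + a22*y + b2) 1))"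
proof -
  define K where "K = a*\<beta>^2 - b*\<alpha>*\<beta> + d*\<alpha>^2"
  define h1 where "h1 = -a*\<beta> + b*\<alpha>/2"
  define h2 where "h2 = -b*\<beta>/2 + d*\<alpha>"
  define h0 where "h0 = (-e*\<beta>+f*\<alpha>)/2"
  show ?thesis
  proof (intro exI allI ballI impI)
    fix x y M
    assume M: "M \<in> \<E>"
    assume H: "\<not> base_point \<E> (vec3 x y 1) \<and> qf M (vec3 x y 1) = 0 \<and>
      nonsingular_conic M \<and> qf M B \<noteq> 0"
    obtain \<mu> \<nu> where Mdef: "M = (\<chi> i j. \<mu> * quad_matrix a b d e f g $i$j + \<nu> * line_sq_matrix \<alpha> \<beta> c $i$j)"
      using M unfolding \<E>_def pencil_def by auto
    define F where "F = FF \<mu> \<nu> a b d e f g \<alpha> \<beta> c"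
    have qfM: "qf M (vec3 X Y Z) = F X Y Z" for X Y Z
      unfolding Mdef F_def by (rule qf_pencil)
    define h where "h = h1*x + h2*y + h0"
    have P0: "F x y 1 = 0" using H qfM by simp
    have "qf M B = \<mu> * K" unfolding B_def qfM F_def FF_def K_def
      by (simp add: algebra_simps power2_eq_square)
    hence muK: "\<mu> \<noteq> 0" "K \<noteq> 0" using H by auto
    have Fl: "F (t*x - u*\<beta>) (t*y + u*\<alpha>) t = 2*u*t*\<mu>*h + u^2*\<mu>*K" for t u
      unfolding F_def FF_line P0[unfolded F_def] h_def h1_def h2_def h0_def K_def by simp
    have lineR: "\<exists>u t. R = vec3 (t*x - u*\<beta>) (t*y + u*\<alpha>) t \<and> qf M R = 2*u*t*\<mu>*h + u^2*\<mu>*K"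
      if RL: "on_line B (vec3 x y 1) R" for R
    proof -
      obtain u t where "R = u *s B + t *s vec3 x y 1" using RL unfolding on_line_def by auto
      hence R: "R = vec3 (t*x - u*\<beta>) (t*y + u*\<alpha>) t"
        unfolding B_def vec3_smult vec3_add by (simp add: vec3_eq algebra_simps)
      show ?thesis using R qfM Fl by auto
    qed
    define u0 where "u0 = -2*h/K"
    define Q' where "Q' = vec3 (x - u0*\<beta>) (y + u0*\<alpha>) 1"
    have Q'eq: "vec3 ((1 + 2*\<beta>*h1/K)*x + (2*\<beta>*h2/K)*y + 2*\<beta>*h0/K)
        ((-2*\<alpha>*h1/K)*x + (1 - 2*\<alpha>*h2/K)*y + (-2*\<alpha>*h0/K)) 1 = Q'"
      unfolding Q'_def u0_def h_def using muK by (simp add: vec3_eq field_simps)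
    have Q'line: "on_line B (vec3 x y 1) Q'"
      unfolding on_line_def Q'_def B_def
      by (rule conjI, simp add: vec3_zero, rule exI[of _ u0], rule exI[of _ 1],
          simp add: vec3_smult vec3_add vec3_eq algebra_simps)
    have Q'conic: "qf M Q' = 0"
    proof -
      have "qf M Q' = F (1*x - u0*\<beta>) (1*y + u0*\<alpha>) 1" unfolding Q'_def qfM by simp
      also have "\<dots> = 0" unfolding Fl u0_def using muK
        by (simp add: field_simps power2_eq_square)
      finally show ?thesis .
    qed
    have P_nz: "vec3 x y 1 \<noteq> 0" by (simp add: vec3_zero)
    have Q'P: "Q' = vec3 x y 1" if PQ: "proj_eq (vec3 x y 1) Q'"
    proof -
      obtain k where "k \<noteq> 0" "Q' = k *s vec3 x y 1" using PQ unfolding proj_eq_def by auto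
      thus ?thesis unfolding Q'_def vec3_smult vec3_eq by auto
    qed
    have h0case: "h = 0" if "Q' = vec3 x y 1"
    proof -
      have "u0*\<beta> = 0" "u0*\<alpha> = 0" using that unfolding Q'_def vec3_eq by auto
      hence "u0 = 0" using assms(1) by auto
      thus ?thesis using muK unfolding u0_def by simp
    qed
    have onlyP: "proj_eq (vec3 x y 1) R" if hR: "h = 0" "on_line B (vec3 x y 1) R" "qf M R = 0" for R
    proof -
      obtain u t where R: "R = vec3 (t*x - u*\<beta>) (t*y + u*\<alpha>) t" "qf M R = 2*u*t*\<mu>*h + u^2*\<mu>*K"
        using lineR hR(2) by blast
      have "u = 0" using R(2) hR muK by simp
      moreover have "R \<noteq> 0" using hR(2) unfolding on_line_def by simp
      ultimately have "t \<noteq> 0" using R(1) by (auto simp: vec3_zero)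
      thus ?thesis using R(1) \<open>u = 0\<close> P_nz \<open>R \<noteq> 0\<close> unfolding proj_eq_def
        by (auto simp: vec3_smult vec3_eq intro!: exI[of _ t])
    qed
    have SI: "second_int M B (vec3 x y 1) Q'"
      unfolding second_int_def using Q'line Q'conic onlyP Q'P h0case by blast
    have UQ: "proj_eq Q Q'" if SQ: "second_int M B (vec3 x y 1) Q" for Q
    proof -
      have Ql: "on_line B (vec3 x y 1) Q" and Qc: "qf M Q = 0"
        and Q3: "\<not> proj_eq (vec3 x y 1) Q \<or> (\<forall>R. on_line B (vec3 x y 1) R \<and> qf M R = 0 \<longrightarrow> proj_eq (vec3 x y 1) R)"
        using SQ unfolding second_int_def by auto
      obtain u t where R: "Q = vec3 (t*x - u*\<beta>) (t*y + u*\<alpha>) t" "qf M Q = 2*u*t*\<mu>*h + u^2*\<mu>*K"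
        using lineR Ql by blast
      have Qnz: "Q \<noteq> 0" using Ql unfolding on_line_def by simp
      have "\<mu> * (u * (2*t*h + u*K)) = 0" using R(2) Qc by (simp add: algebra_simps power2_eq_square)
      hence eq: "u * (2*t*h + u*K) = 0" using muK by simp
      show ?thesis
      proof (cases "u = 0")
        case True
        hence t: "t \<noteq> 0" using Qnz R(1) by (auto simp: vec3_zero)
        have "proj_eq (vec3 x y 1) Q" unfolding proj_eq_def using P_nz Qnz t R(1) True
          by (auto simp: vec3_smult vec3_eq intro!: exI[of _ t])
        hence "proj_eq (vec3 x y 1) Q'" using Q3 Q'line Q'conic by blast
        hence "Q' = vec3 x y 1" by (rule Q'P)
        thus ?thesis unfolding proj_eq_def using P_nz Qnz t R(1) True
          by (auto simp: vec3_smult vec3_eq intro!: exI[of _ "1/t"])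
      next
        case False
        hence "2*t*h + u*K = 0" using eq by simp
        hence u: "u = -2*t*h/K" using muK by (simp add: field_simps add_eq_0_iff)
        hence t: "t \<noteq> 0" using False by auto
        have "Q' = (1/t) *s Q" unfolding Q'_def R(1) u u0_def vec3_smult vec3_eq using t muK
          by (simp add: field_simps)
        moreover have "Q' \<noteq> 0" unfolding Q'_def by (simp add: vec3_zero)
        ultimately show ?thesis unfolding proj_eq_def using Qnz t by auto
      qed
    qed
    show "second_int M B (vec3 x y 1) (vec3 ((1 + 2*\<beta>*h1/K)*x + (2*\<beta>*h2/K)*y + 2*\<beta>*h0/K)
        ((-2*\<alpha>*h1/K)*x + (1 - 2*\<alpha>*h2/K)*y + (-2*\<alpha>*h0/K)) 1) \<and>
      (\<forall>Q. second_int M B (vec3 x y 1) Q \<longrightarrow> proj_eq Q (vec3 ((1 + 2*\<beta>*h1/K)*x + (2*\<beta>*h2/K)*y + 2*\<beta>*h0/K)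
        ((-2*\<alpha>*h1/K)*x + (1 - 2*\<alpha>*h2/K)*y + (-2*\<alpha>*h0/K)) 1))"
      unfolding Q'eq using SI UQ by blast
  qed
qed

end
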